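(* Let $(\phi,F)$ be a special Kähler pair defined on an open subset $U$ of an affine special Kähler manifold, $(z,w):=\phi$, $f:=2F-z^tw$ and $K:=\frac12\gamma(\phi,\phi)$. Then $(\phi,F)$ is non-degenerate if and only if $\mathrm{Im}\,f+K\neq0$ on $U$ and the real $(1,1)$-form $\bar\omega:=\frac{\sqrt{-1}}2\partial\bar\partial\log|\mathrm{Im}\,f+K|$ is non-degenerate on $U$.
   Context: $\mathbb{C}^{2n}$: coordinates $(z,w)$, $\Omega=\sum dz^i\wedge dw_i$, $\gamma=\sqrt{-1}\Omega(\cdot,\bar\cdot)$ (so $\frac12\gamma(\phi,\phi)=\sum_i\mathrm{Im}(\bar z^iw_i)$), $\lambda=\sum w_idz^i$; $\mathbb{C}^{2n+2}$: coordinates $(z^0,w_0,z,w)$, $\hat\Omega=dz^0\wedge dw_0+\Omega$, $\hat\gamma=\sqrt{-1}\hat\Omega(\cdot,\bar\cdot)$. A special Kähler pair $(\phi,F)$ of $U$: $\phi:U\to\mathbb{C}^{2n}$ holomorphic immersion with $\phi^*\Omega=0$ and $\phi^*\gamma$ non-degenerate, inducing the affine special Kähler structure of $U$, and holomorphic $F$ with $dF=\phi^*\lambda$. Its conification is $\Phi:\mathbb{C}^*\times U\to\mathbb{C}^{2n+2}$, $\Phi(z^0,p)=z^0(1,(2F-z^tw)(p),\phi(p))$; $(\phi,F)$ is non-degenerate if $\Phi^*\hat\gamma$ is non-degenerate and $\hat\gamma(\Phi,\Phi)\neq0$ everywhere. *)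

theory Defs
  imports "HOL-Analysis.Analysis"
begin

(* Points of U lie in C^m = complex^'m (a holomorphic chart of the affine special
   Kaehler manifold); C^{2n} = complex^'n * complex^'n with coordinates (z,w);
   C^{2n+2} = complex * complex * complex^'n * complex^'n with coordinates (z0,w0,z,w).
   Real tangent vectors at points of U are identified with elements of complex^'m
   (resp. complex * complex^'m for C^* x U); differentials are real Frechet derivatives. *)

definition holo_vec :: "(complex^'m) set \<Rightarrow> (complex^'m \<Rightarrow> complex^'k) \<Rightarrow> bool" where
  "holo_vec U f \<longleftrightarrow> (\<forall>p\<in>U. f differentiable (at p) \<and>
     (\<forall>v. frechet_derivative f (at p) (\<i> *s v) = \<i> *s frechet_derivative f (at p) v))"

definition holo_fun :: "(complex^'m) set \<Rightarrow> (complex^'m \<Rightarrow> complex) \<Rightarrow> bool" where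
  "holo_fun U f \<longleftrightarrow> (\<forall>p\<in>U. f differentiable (at p) \<and>
     (\<forall>v. frechet_derivative f (at p) (\<i> *s v) = \<i> * frechet_derivative f (at p) v))"

definition Omega :: "(complex^'n) \<times> (complex^'n) \<Rightarrow> (complex^'n) \<times> (complex^'n) \<Rightarrow> complex" where
  "Omega u v = (\<Sum>i\<in>UNIV. (fst u)$i * (snd v)$i - (fst v)$i * (snd u)$i)"

definition conj_pt :: "(complex^'n) \<times> (complex^'n) \<Rightarrow> (complex^'n) \<times> (complex^'n)" where
  "conj_pt v = ((\<chi> i. cnj ((fst v)$i)), (\<chi> i. cnj ((snd v)$i)))"

definition gamma :: "(complex^'n) \<times> (complex^'n) \<Rightarrow> (complex^'n) \<times> (complex^'n) \<Rightarrow> complex" where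
  "gamma u v = \<i> * Omega u (conj_pt v)"

definition Omega_hat :: "complex \<times> complex \<times> (complex^'n) \<times> (complex^'n)
     \<Rightarrow> complex \<times> complex \<times> (complex^'n) \<times> (complex^'n) \<Rightarrow> complex" where
  "Omega_hat u v = (case u of (z0, w0, z, w) \<Rightarrow> case v of (z0', w0', z', w') \<Rightarrow>
      z0 * w0' - z0' * w0 + Omega (z, w) (z', w'))"

definition gamma_hat :: "complex \<times> complex \<times> (complex^'n) \<times> (complex^'n)
     \<Rightarrow> complex \<times> complex \<times> (complex^'n) \<times> (complex^'n) \<Rightarrow> complex" where
  "gamma_hat u v = (case v of (z0', w0', z', w') \<Rightarrow>
      \<i> * Omega_hat u (cnj z0', cnj w0', (\<chi> i. cnj (z'$i)), (\<chi> i. cnj (w'$i))))"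

definition nondeg :: "('v::zero \<Rightarrow> 'v \<Rightarrow> 'c::zero) \<Rightarrow> bool" where
  "nondeg B \<longleftrightarrow> (\<forall>X. (\<forall>Y. B X Y = 0) \<longrightarrow> X = 0)"

definition sk_pair :: "(complex^'m) set \<Rightarrow> (complex^'m \<Rightarrow> complex^'n) \<Rightarrow> (complex^'m \<Rightarrow> complex^'n)
     \<Rightarrow> (complex^'m \<Rightarrow> complex) \<Rightarrow> bool" where
  "sk_pair U z w F \<longleftrightarrow> open U \<and> holo_vec U z \<and> holo_vec U w \<and> holo_fun U F \<and>
     (\<forall>p\<in>U.
        \<comment> \<open>immersion\<close>
        inj (\<lambda>v. (frechet_derivative z (at p) v, frechet_derivative w (at p) v)) \<and>
        \<comment> \<open>phi^* Omega = 0\<close>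
        (\<forall>u v. Omega (frechet_derivative z (at p) u, frechet_derivative w (at p) u)
                      (frechet_derivative z (at p) v, frechet_derivative w (at p) v) = 0) \<and>
        \<comment> \<open>phi^* gamma non-degenerate\<close>
        nondeg (\<lambda>u v. gamma (frechet_derivative z (at p) u, frechet_derivative w (at p) u)
                             (frechet_derivative z (at p) v, frechet_derivative w (at p) v)) \<and>
        \<comment> \<open>dF = phi^* lambda, lambda = sum w_i dz^i\<close>
        (\<forall>v. frechet_derivative F (at p) v = (\<Sum>i\<in>UNIV. (w p)$i * (frechet_derivative z (at p) v)$i)))"

definition fpot :: "(complex^'m \<Rightarrow> complex^'n) \<Rightarrow> (complex^'m \<Rightarrow> complex^'n)
     \<Rightarrow> (complex^'m \<Rightarrow> complex) \<Rightarrow> complex^'m \<Rightarrow> complex" where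
  "fpot z w F p = 2 * F p - (\<Sum>i\<in>UNIV. (z p)$i * (w p)$i)"

definition conif :: "(complex^'m \<Rightarrow> complex^'n) \<Rightarrow> (complex^'m \<Rightarrow> complex^'n)
     \<Rightarrow> (complex^'m \<Rightarrow> complex) \<Rightarrow> complex \<times> (complex^'m)
     \<Rightarrow> complex \<times> complex \<times> (complex^'n) \<times> (complex^'n)" where
  "conif z w F q = (case q of (z0, p) \<Rightarrow> (z0, z0 * fpot z w F p, z0 *s z p, z0 *s w p))"

definition sk_nondegenerate :: "(complex^'m) set \<Rightarrow> (complex^'m \<Rightarrow> complex^'n) \<Rightarrow> (complex^'m \<Rightarrow> complex^'n)
     \<Rightarrow> (complex^'m \<Rightarrow> complex) \<Rightarrow> bool" where
  "sk_nondegenerate U z w F \<longleftrightarrow> (\<forall>z0 p. z0 \<noteq> 0 \<longrightarrow> p \<in> U \<longrightarrow>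
      nondeg (\<lambda>X Y. gamma_hat (frechet_derivative (conif z w F) (at (z0, p)) X)
                               (frechet_derivative (conif z w F) (at (z0, p)) Y)) \<and>
      gamma_hat (conif z w F (z0, p)) (conif z w F (z0, p)) \<noteq> 0)"

definition dir_deriv :: "(complex^'m \<Rightarrow> complex) \<Rightarrow> complex^'m \<Rightarrow> complex^'m \<Rightarrow> complex" where
  "dir_deriv g p v = vector_derivative (\<lambda>t::real. g (p + t *\<^sub>R v)) (at 0)"

definition wirt_d :: "'m \<Rightarrow> (complex^'m \<Rightarrow> complex) \<Rightarrow> complex^'m \<Rightarrow> complex" where
  "wirt_d a g p = (dir_deriv g p (axis a 1) - \<i> * dir_deriv g p (axis a \<i>)) / 2"

definition wirt_dbar :: "'m \<Rightarrow> (complex^'m \<Rightarrow> complex) \<Rightarrow> complex^'m \<Rightarrow> complex" where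
  "wirt_dbar a g p = (dir_deriv g p (axis a 1) + \<i> * dir_deriv g p (axis a \<i>)) / 2"

(* the 2-form  d dbar g = sum_{a,b} d_a dbar_b g dz^a /\ dzbar^b  evaluated on real tangent vectors *)
definition ddbar :: "(complex^'m \<Rightarrow> complex) \<Rightarrow> complex^'m \<Rightarrow> complex^'m \<Rightarrow> complex^'m \<Rightarrow> complex" where
  "ddbar g p X Y = (\<Sum>a\<in>UNIV. \<Sum>b\<in>UNIV. wirt_d a (wirt_dbar b g) p *
      (X$a * cnj (Y$b) - Y$a * cnj (X$b)))"

definition Kpot :: "(complex^'m \<Rightarrow> complex^'n) \<Rightarrow> (complex^'m \<Rightarrow> complex^'n) \<Rightarrow> complex^'m \<Rightarrow> real" where
  "Kpot z w p = Re (gamma (z p, w p) (z p, w p) / 2)"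

definition omega_bar :: "(complex^'m \<Rightarrow> complex^'n) \<Rightarrow> (complex^'m \<Rightarrow> complex^'n)
     \<Rightarrow> (complex^'m \<Rightarrow> complex) \<Rightarrow> complex^'m \<Rightarrow> complex^'m \<Rightarrow> complex^'m \<Rightarrow> complex" where
  "omega_bar z w F p X Y = (\<i> / 2) *
     ddbar (\<lambda>q. complex_of_real (ln \<bar>Im (fpot z w F q) + Kpot z w q\<bar>)) p X Y"

end

theory Submission
  imports Defs "HOL-Complex_Analysis.Cauchy_Integral_Formula"
begin

lemma cont_param_contour:
  fixes f :: "'a::topological_space \<Rightarrow> complex \<Rightarrow> complex"
  assumes cf: "continuous_on (S \<times> path_image g) (\<lambda>(x,y). f x y)"
    and cd: "continuous_on {0..1} (\<lambda>t. vector_derivative g (at t))"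
    and pg: "path g"
  shows "continuous_on S (\<lambda>x. contour_integral g (f x))"
proof -
  have "continuous_on (S \<times> cbox 0 1) (\<lambda>(x, t). f x (g t) * vector_derivative g (at t))"
  proof -
    have c1: "continuous_on (S \<times> cbox 0 1) (\<lambda>(x, t). f x (g t))"
    proof -
      have "continuous_on (S \<times> cbox 0 1) ((\<lambda>(x,y). f x y) \<circ> (\<lambda>(x,t). (x, g t)))"
      proof (rule continuous_on_compose)
        show "continuous_on (S \<times> cbox 0 1) (\<lambda>(x, t). (x, g t))"
        proof -
          have "continuous_on (S \<times> cbox 0 1) (g \<circ> snd)"
            by (rule continuous_on_compose) (use pg in \<open>auto simp: path_def intro: continuous_on_snd continuous_on_id\<close>)
          then show ?thesis
            by (simp add: split_beta o_def continuous_on_Pair continuous_on_fst continuous_on_id)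
        qed
        show "continuous_on ((\<lambda>(x, t). (x, g t)) ` (S \<times> cbox 0 1)) (\<lambda>(x, y). f x y)"
          by (rule continuous_on_subset[OF cf]) (auto simp: path_image_def)
      qed
      then show ?thesis by (simp add: o_def split_beta)
    qed
    have c2: "continuous_on (S \<times> cbox 0 1) (\<lambda>(x, t::real). vector_derivative g (at t))"
    proof -
      have "continuous_on (S \<times> cbox 0 1) ((\<lambda>t. vector_derivative g (at t)) \<circ> snd)"
        by (rule continuous_on_compose) (use cd in \<open>auto intro: continuous_on_snd continuous_on_id\<close>)
      then show ?thesis by (simp add: split_beta o_def)
    qed
    show ?thesis using continuous_on_mult[OF c1 c2] by (simp add: split_beta)
  qed
  from integral_continuous_on_param[OF this]
  show ?thesis by (simp add: contour_integral_integral)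
qed

lemma continuous_on_swap_args:
  assumes "continuous_on (A \<times> B) (\<lambda>(x,y). f x y)"
  shows "continuous_on (B \<times> A) (\<lambda>(y,x). f x y)"
proof -
  have "continuous_on (B \<times> A) ((\<lambda>(x,y). f x y) \<circ> (\<lambda>(y,x). (x,y)))"
  proof (rule continuous_on_compose)
    show "continuous_on (B \<times> A) (\<lambda>(y, x). (x, y))"
      by (simp add: split_beta continuous_on_Pair continuous_on_fst continuous_on_snd continuous_on_id)
    have "(\<lambda>(y, x). (x, y)) ` (B \<times> A) = A \<times> B" by auto
    then show "continuous_on ((\<lambda>(y, x). (x, y)) ` (B \<times> A)) (\<lambda>(x, y). f x y)"
      using assms by simp
  qed
  then show ?thesis by (simp add: o_def split_beta)
qed

lemma vd_circle_cont: "continuous_on {0..1} (\<lambda>t. vector_derivative (circlepath c r) (at t))"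
  by (simp add: vector_derivative_circlepath continuous_intros)

lemma param_holo_circle:
  fixes \<phi> :: "complex \<Rightarrow> complex \<Rightarrow> complex"
  assumes S: "open S"
    and cont: "continuous_on (S \<times> sphere c r) (\<lambda>(s,t). \<phi> s t)"
    and hol: "\<And>t. t \<in> sphere c r \<Longrightarrow> (\<lambda>s. \<phi> s t) holomorphic_on S"
    and r: "0 \<le> r"
  shows "(\<lambda>s. contour_integral (circlepath c r) (\<phi> s)) holomorphic_on S"
proof -
  let ?C = "circlepath c r"
  have pim: "path_image ?C = sphere c r" using r by (simp add: path_image_circlepath_nonneg)
  have contS: "continuous_on S (\<lambda>s. contour_integral ?C (\<phi> s))"
    by (rule cont_param_contour) (use cont pim vd_circle_cont in auto)
  have swap: "contour_integral (linepath x y) (\<lambda>s. contour_integral ?C (\<phi> s)) =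
      contour_integral ?C (\<lambda>t. contour_integral (linepath x y) (\<lambda>s. \<phi> s t))"
    if seg: "closed_segment x y \<subseteq> S" for x y
  proof (rule contour_integral_swap)
    show "continuous_on (path_image (linepath x y) \<times> path_image ?C) (\<lambda>(y1, y2). \<phi> y1 y2)"
      using seg pim by (auto intro: continuous_on_subset[OF cont])
  qed (auto simp: vd_circle_cont)
  have Qcont: "continuous_on (sphere c r) (\<lambda>t. contour_integral (linepath x y) (\<lambda>s. \<phi> s t))"
    if seg: "closed_segment x y \<subseteq> S" for x y
  proof (rule cont_param_contour)
    show "continuous_on (sphere c r \<times> path_image (linepath x y)) (\<lambda>(t, s). \<phi> s t)"
      by (rule continuous_on_swap_args) (use seg in \<open>auto intro: continuous_on_subset[OF cont]\<close>)
  qed auto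
  have Qint: "(\<lambda>t. contour_integral (linepath x y) (\<lambda>s. \<phi> s t)) contour_integrable_on ?C"
    if seg: "closed_segment x y \<subseteq> S" for x y
    using Qcont[OF seg] pim by (intro contour_integrable_continuous_circlepath) simp
  have "(\<lambda>s. contour_integral ?C (\<phi> s)) analytic_on S"
  proof (rule Morera_triangle[OF contS S], intro allI impI)
    fix a b c' assume hull: "convex hull {a, b, c'} \<subseteq> S"
    have sab: "closed_segment a b \<subseteq> S" and sbc: "closed_segment b c' \<subseteq> S" and sca: "closed_segment c' a \<subseteq> S"
      by (rule subset_trans[OF segments_subset_convex_hull(1) hull], rule subset_trans[OF segments_subset_convex_hull(3) hull],
          rule subset_trans[OF segments_subset_convex_hull(5) hull])
    have zero: "contour_integral (linepath a b) (\<lambda>s. \<phi> s t) + contour_integral (linepath b c') (\<lambda>s. \<phi> s t)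
              + contour_integral (linepath c' a) (\<lambda>s. \<phi> s t) = 0" if t: "t \<in> sphere c r" for t
    proof -
      have h: "(\<lambda>s. \<phi> s t) holomorphic_on convex hull {a, b, c'}"
        by (rule holomorphic_on_subset[OF hol[OF t] hull])
      have ci: "(\<lambda>s. \<phi> s t) contour_integrable_on linepath x y" if "closed_segment x y \<subseteq> convex hull {a,b,c'}" for x y
        by (rule contour_integrable_continuous_linepath, rule continuous_on_subset[OF holomorphic_on_imp_continuous_on[OF h] that])
      have "((\<lambda>s. \<phi> s t) has_contour_integral 0) (linepath a b +++ linepath b c' +++ linepath c' a)"
        by (rule Cauchy_theorem_triangle[OF h])
      then have "contour_integral (linepath a b +++ linepath b c' +++ linepath c' a) (\<lambda>s. \<phi> s t) = 0"
        by (rule contour_integral_unique)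
      moreover have "contour_integral (linepath a b +++ linepath b c' +++ linepath c' a) (\<lambda>s. \<phi> s t) =
          contour_integral (linepath a b) (\<lambda>s. \<phi> s t) + contour_integral (linepath b c') (\<lambda>s. \<phi> s t)
              + contour_integral (linepath c' a) (\<lambda>s. \<phi> s t)"
      proof -
        have s1: "closed_segment a b \<subseteq> convex hull {a,b,c'}" and s2: "closed_segment b c' \<subseteq> convex hull {a,b,c'}"
          and s3: "closed_segment c' a \<subseteq> convex hull {a,b,c'}"
          by (rule segments_subset_convex_hull)+
        note i1 = ci[OF s1] and i2 = ci[OF s2] and i3 = ci[OF s3]
        have i23: "(\<lambda>s. \<phi> s t) contour_integrable_on (linepath b c' +++ linepath c' a)"
          using i2 i3 by simp
        have "contour_integral (linepath a b +++ linepath b c' +++ linepath c' a) (\<lambda>s. \<phi> s t)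
            = contour_integral (linepath a b) (\<lambda>s. \<phi> s t) + contour_integral (linepath b c' +++ linepath c' a) (\<lambda>s. \<phi> s t)"
          by (rule contour_integral_join[OF i1 i23]) auto
        also have "contour_integral (linepath b c' +++ linepath c' a) (\<lambda>s. \<phi> s t)
            = contour_integral (linepath b c') (\<lambda>s. \<phi> s t) + contour_integral (linepath c' a) (\<lambda>s. \<phi> s t)"
          by (rule contour_integral_join[OF i2 i3]) auto
        finally show ?thesis by (simp add: add.assoc)
      qed
      ultimately show ?thesis by simp
    qed
    have "contour_integral (linepath a b) (\<lambda>s. contour_integral ?C (\<phi> s)) +
          contour_integral (linepath b c') (\<lambda>s. contour_integral ?C (\<phi> s)) +
          contour_integral (linepath c' a) (\<lambda>s. contour_integral ?C (\<phi> s))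
        = contour_integral ?C (\<lambda>t. contour_integral (linepath a b) (\<lambda>s. \<phi> s t)) +
          contour_integral ?C (\<lambda>t. contour_integral (linepath b c') (\<lambda>s. \<phi> s t)) +
          contour_integral ?C (\<lambda>t. contour_integral (linepath c' a) (\<lambda>s. \<phi> s t))"
      by (simp only: swap[OF sab] swap[OF sbc] swap[OF sca])
    also have "\<dots> = contour_integral ?C (\<lambda>t. contour_integral (linepath a b) (\<lambda>s. \<phi> s t) +
          contour_integral (linepath b c') (\<lambda>s. \<phi> s t) + contour_integral (linepath c' a) (\<lambda>s. \<phi> s t))"
      using Qint[OF sab] Qint[OF sbc] Qint[OF sca]
      by (simp only: contour_integral_add contour_integrable_add)
    also have "\<dots> = contour_integral ?C (\<lambda>t. 0)"
      by (rule contour_integral_cong) (use zero pim r in auto)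
    also have "\<dots> = 0" by simp
    finally show "contour_integral (linepath a b) (\<lambda>s. contour_integral ?C (\<phi> s)) +
          contour_integral (linepath b c') (\<lambda>s. contour_integral ?C (\<phi> s)) +
          contour_integral (linepath c' a) (\<lambda>s. contour_integral ?C (\<phi> s)) = 0" .
  qed
  then show ?thesis by (rule analytic_imp_holomorphic)
qed

definition hol :: "(complex^'m) set \<Rightarrow> (complex^'m \<Rightarrow> complex) \<Rightarrow> bool" where
  "hol U g \<longleftrightarrow> (\<forall>p\<in>U. \<exists>c. (g has_derivative (\<lambda>v. \<Sum>a\<in>UNIV. c$a * v$a)) (at p))"

lemma hol_D:
  fixes g :: "complex^'m \<Rightarrow> complex"
  assumes "hol U g" "p \<in> U"
  shows "(g has_derivative frechet_derivative g (at p)) (at p)"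
    and "frechet_derivative g (at p) (c *s v) = c * frechet_derivative g (at p) v"
proof -
  obtain cc :: "complex^'m" where cc: "(g has_derivative (\<lambda>v. \<Sum>a\<in>UNIV. cc$a * v$a)) (at p)"
    using assms unfolding hol_def by blast
  have fd: "frechet_derivative g (at p) = (\<lambda>v. \<Sum>a\<in>UNIV. cc$a * v$a)"
    using frechet_derivative_at[OF cc] by simp
  show "(g has_derivative frechet_derivative g (at p)) (at p)" using cc fd by simp
  show "frechet_derivative g (at p) (c *s v) = c * frechet_derivative g (at p) v"
    by (simp add: fd sum_distrib_left algebra_simps)
qed

lemma hol_cont: "hol U g \<Longrightarrow> continuous_on U g"
  by (meson continuous_at_imp_continuous_on has_derivative_continuous hol_D(1))

lemma smul_line_bl: "bounded_linear (\<lambda>h::complex. h *s (u::complex^'m))"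
proof -
  have "linear (\<lambda>h::complex. h *s u)"
    by (rule linearI) (auto simp: vec_eq_iff algebra_simps)
  then show ?thesis by (simp add: linear_conv_bounded_linear)
qed

lemma line_deriv:
  assumes "hol U g" "a + s0 *s u \<in> U"
  shows "((\<lambda>s. g (a + s *s u)) has_field_derivative frechet_derivative g (at (a + s0 *s u)) u) (at s0)"
proof -
  have d1: "((\<lambda>s. a + s *s u) has_derivative (\<lambda>h. h *s u)) (at s0)"
    by (rule has_derivative_add_const[where c=a, simplified add.commute] |
        intro has_derivative_add has_derivative_const bounded_linear_imp_has_derivative smul_line_bl)+
  have "((\<lambda>s. g (a + s *s u)) has_derivative (\<lambda>h. frechet_derivative g (at (a + s0 *s u)) (h *s u))) (at s0)"
    using has_derivative_compose[OF d1 hol_D(1)[OF assms]] by (simp add: o_def)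
  then show ?thesis
    unfolding has_field_derivative_def hol_D(2)[OF assms]
    by (rule has_derivative_eq_rhs) (auto simp: fun_eq_iff mult.commute)
qed

lemma hol_second:
  fixes g :: "complex^'m \<Rightarrow> complex"
  assumes hg: "hol U g" and oU: "open U" and q: "q \<in> U"
  shows "\<exists>d. ((\<lambda>s. frechet_derivative g (at (q + s *s u)) v) has_field_derivative d) (at 0)"
proof -
  define P where "P = (\<lambda>st::complex\<times>complex. q + fst st *s u + snd st *s v)"
  have contP: "continuous_on UNIV P"
    unfolding P_def
    by (intro continuous_intros linear_continuous_on bounded_linear_compose[OF smul_line_bl]
          bounded_linear_fst bounded_linear_snd)
  have "open (P -` U)" by (rule open_vimage[OF oU contP])
  moreover have "(0,0) \<in> P -` U" using q by (simp add: P_def)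
  ultimately obtain e where e: "e > 0" "ball (0,0) e \<subseteq> P -` U"
    by (meson open_contains_ball)
  define R where "R = e / 3"
  have R: "R > 0" using e by (simp add: R_def)
  have inU: "q + s *s u + t *s v \<in> U" if "norm s \<le> R" "norm t \<le> R" for s t
  proof -
    have "norm (s, t) \<le> norm s + norm t" by (rule norm_Pair_le)
    also have "\<dots> < e" using that R by (simp add: R_def)
    finally have "(s,t) \<in> ball (0,0) e" by (simp add: dist_norm norm_Pair)
    then show ?thesis using e by (auto simp: P_def)
  qed
  define G where "G = (\<lambda>s t. g (q + s *s u + t *s v))"
  have contg: "continuous_on U g" by (rule hol_cont[OF hg])
  have contG: "continuous_on (cball 0 R \<times> cball 0 R) (\<lambda>(s,t). G s t)"
  proof -
    have "continuous_on (cball 0 R \<times> cball 0 R) (g \<circ> P)"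
    proof (rule continuous_on_compose)
      show "continuous_on (cball 0 R \<times> cball 0 R) P" using contP continuous_on_subset by blast
      show "continuous_on (P ` (cball 0 R \<times> cball 0 R)) g"
        by (rule continuous_on_subset[OF contg]) (auto simp: P_def intro!: inU)
    qed
    then show ?thesis by (simp add: G_def P_def o_def split_beta)
  qed
  define \<Psi> where "\<Psi> = (\<lambda>s. contour_integral (circlepath 0 R) (\<lambda>t. G s t / (t - 0)^2))"
  have eq: "frechet_derivative g (at (q + s *s u)) v = 1 / (2 * of_real pi * \<i>) * \<Psi> s"
    if s: "s \<in> ball 0 R" for s
  proof -
    have sR: "norm s \<le> R" using s by simp
    have c1: "continuous_on (cball 0 R) (G s)"
    proof -
      have "continuous_on ((\<lambda>t. (s,t)) ` cball 0 R) (\<lambda>(s,t). G s t)"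
        by (rule continuous_on_subset[OF contG]) (use sR in auto)
      then have "continuous_on (cball 0 R) ((\<lambda>(s,t). G s t) \<circ> (\<lambda>t. (s,t)))"
        by (intro continuous_on_compose continuous_intros)
      then show ?thesis by (simp add: o_def)
    qed
    have dG: "(G s has_field_derivative frechet_derivative g (at (q + s *s u + t *s v)) v) (at t)"
      if "norm t \<le> R" for t
      using line_deriv[OF hg, of "q + s *s u" t v] inU[OF sR that] by (simp add: G_def)
    have h1: "G s holomorphic_on ball 0 R"
      unfolding holomorphic_on_def field_differentiable_def
    proof
      fix t :: complex assume "t \<in> ball 0 R"
      then have "norm t \<le> R" by simp
      from has_field_derivative_at_within[OF dG[OF this]]
      show "\<exists>f'. (G s has_field_derivative f') (at t within ball 0 R)" by blast
    qed
    have "(G s has_field_derivative 1 / (2 * of_real pi * \<i>) * \<Psi> s) (at 0)"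
      using Cauchy_derivative_integral_circlepath(2)[OF c1 h1, of 0] R by (simp add: \<Psi>_def)
    moreover have "(G s has_field_derivative frechet_derivative g (at (q + s *s u)) v) (at 0)"
      using dG[of 0] R by simp
    ultimately show ?thesis using DERIV_unique by metis
  qed
  have hol\<Psi>: "\<Psi> holomorphic_on ball 0 R"
    unfolding \<Psi>_def
  proof (rule param_holo_circle)
    show "continuous_on (ball 0 R \<times> sphere 0 R) (\<lambda>(s, t). G s t / (t - 0)\<^sup>2)"
    proof -
      have "continuous_on (ball 0 R \<times> sphere 0 R) (\<lambda>(s, t). G s t)"
        by (rule continuous_on_subset[OF contG]) auto
      moreover have "continuous_on (ball 0 R \<times> sphere 0 R) (\<lambda>(s, t::complex). (t - 0)\<^sup>2)"
        by (auto simp: split_beta intro!: continuous_intros)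
      ultimately show ?thesis
        using R by (auto simp: split_beta intro!: continuous_on_divide)
    qed
    show "(\<lambda>s. G s t / (t - 0)\<^sup>2) holomorphic_on ball 0 R" if t: "t \<in> sphere 0 R" for t
    proof -
      have "(\<lambda>s. G s t) holomorphic_on ball 0 R"
        unfolding holomorphic_on_def field_differentiable_def
      proof
        fix s :: complex assume s: "s \<in> ball 0 R"
        have "((\<lambda>s. g ((q + t *s v) + s *s u)) has_field_derivative
                frechet_derivative g (at ((q + t *s v) + s *s u)) u) (at s)"
          by (rule line_deriv[OF hg]) (use inU[of s t] s t in \<open>auto simp: add_ac\<close>)
        then show "\<exists>f'. ((\<lambda>s. G s t) has_field_derivative f') (at s within ball 0 R)"
          by (auto simp: G_def add_ac intro: has_field_derivative_at_within)
      qed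
      then show ?thesis by (intro holomorphic_intros) (use t R in auto)
    qed
  qed (use R in auto)
  then have "((\<lambda>s. 1 / (2 * of_real pi * \<i>) * \<Psi> s) has_field_derivative
       1 / (2 * of_real pi * \<i>) * deriv \<Psi> 0) (at 0)"
    using R by (intro DERIV_cmult holomorphic_derivI[OF hol\<Psi>]) auto
  then have "((\<lambda>s. frechet_derivative g (at (q + s *s u)) v) has_field_derivative
       1 / (2 * of_real pi * \<i>) * deriv \<Psi> 0) (at 0)"
    by (rule has_field_derivative_transform_within_open[where S="ball 0 R"]) (use R eq in auto)
  then show ?thesis by blast
qed

lemma smul_decomp: "c *s (x::complex^'m) = Re c *\<^sub>R x + Im c *\<^sub>R (\<i> *s x)"
proof -
  have "c * y = complex_of_real (Re c) * y + complex_of_real (Im c) * (\<i> * y)" for y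
    by (subst complex_eq[of c]) (simp add: algebra_simps)
  note * = this
  show ?thesis unfolding vec_eq_iff
  proof
    fix i show "(c *s x) $ i = (Re c *\<^sub>R x + Im c *\<^sub>R (\<i> *s x)) $ i"
      using *[of "x$i"] unfolding vector_add_component vector_scaleR_component vector_smult_component by (simp only: scaleR_conv_of_real)
  qed
qed

lemma hol_intro:
  fixes g :: "complex^'m \<Rightarrow> complex"
  assumes "\<And>p. p \<in> U \<Longrightarrow> (g has_derivative D p) (at p)"
    and "\<And>p v. p \<in> U \<Longrightarrow> D p (\<i> *s v) = \<i> * D p v"
  shows "hol U g"
  unfolding hol_def
proof
  fix p assume p: "p \<in> U"
  have lin: "linear (D p)" using assms(1)[OF p] has_derivative_linear by blast
  have cl: "D p (c *s v) = c * D p v" for c v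
  proof -
    have "D p (c *s v) = Re c *\<^sub>R D p v + Im c *\<^sub>R D p (\<i> *s v)"
      by (subst smul_decomp) (simp only: linear_add[OF lin] linear_scale[OF lin])
    also have "\<dots> = c * D p v"
      using assms(2)[OF p] by (subst (3) complex_eq[of c]) (simp add: scaleR_conv_of_real algebra_simps)
    finally show ?thesis .
  qed
  have "D p v = (\<Sum>a\<in>UNIV. D p (axis a 1) * v$a)" for v
  proof -
    have "D p v = D p (\<Sum>a\<in>UNIV. (v$a) *s axis a 1)" by (simp add: basis_expansion)
    also have "\<dots> = (\<Sum>a\<in>UNIV. D p ((v$a) *s axis a 1))" by (rule linear_sum[OF lin])
    also have "\<dots> = (\<Sum>a\<in>UNIV. D p (axis a 1) * v$a)" by (simp add: cl mult.commute)
    finally show ?thesis .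
  qed
  note eqv = this
  have "D p = (\<lambda>v. \<Sum>a\<in>UNIV. (\<chi> a. D p (axis a 1))$a * v$a)"
  proof (rule ext)
    fix v show "D p v = (\<Sum>a\<in>UNIV. (\<chi> a. D p (axis a 1))$a * v$a)"
      by (subst eqv) (simp only: vec_lambda_beta)
  qed
  then show "\<exists>c. (g has_derivative (\<lambda>v. \<Sum>a\<in>UNIV. c$a * v$a)) (at p)"
    using assms(1)[OF p] by metis
qed

lemma holo_fun_hol: "holo_fun U g \<Longrightarrow> hol U g"
  unfolding holo_fun_def
  by (rule hol_intro[where D="\<lambda>p. frechet_derivative g (at p)"]) (auto simp: frechet_derivative_works)

lemma holo_vec_D: "holo_vec U z \<Longrightarrow> p \<in> U \<Longrightarrow> (z has_derivative frechet_derivative z (at p)) (at p)"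
  unfolding holo_vec_def by (auto simp: frechet_derivative_works)

lemma holo_vec_comp_deriv:
  assumes "holo_vec U z" "p \<in> U"
  shows "((\<lambda>q. z q $ i) has_derivative (\<lambda>v. frechet_derivative z (at p) v $ i)) (at p)"
  using bounded_linear.has_derivative[OF bounded_linear_vec_nth holo_vec_D[OF assms]] .

lemma holo_vec_hol: "holo_vec U z \<Longrightarrow> hol U (\<lambda>q. z q $ i)"
  by (rule hol_intro[OF holo_vec_comp_deriv]) (auto simp: holo_vec_def)

lemma holo_vec_comp_fd:
  assumes "holo_vec U z" "p \<in> U"
  shows "frechet_derivative (\<lambda>q. z q $ i) (at p) v = frechet_derivative z (at p) v $ i"
  by (simp add: frechet_derivative_at[OF holo_vec_comp_deriv[OF assms, of i], symmetric])

lemma hol_const: "hol U (\<lambda>q. c)"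
  unfolding hol_def by (auto intro!: exI[of _ 0] has_derivative_eq_rhs[OF has_derivative_const])

lemma hol_add: assumes "hol U g" "hol U h" shows "hol U (\<lambda>q. g q + h q)"
  unfolding hol_def
proof
  fix p assume p: "p \<in> U"
  obtain c1 where 1: "(g has_derivative (\<lambda>v. \<Sum>a\<in>UNIV. c1$a * v$a)) (at p)" using assms(1) p hol_def by blast
  obtain c2 where 2: "(h has_derivative (\<lambda>v. \<Sum>a\<in>UNIV. c2$a * v$a)) (at p)" using assms(2) p hol_def by blast
  show "\<exists>c. ((\<lambda>q. g q + h q) has_derivative (\<lambda>v. \<Sum>a\<in>UNIV. c$a * v$a)) (at p)"
    by (rule exI[of _ "c1 + c2"], rule has_derivative_eq_rhs[OF has_derivative_add[OF 1 2]])
       (simp add: fun_eq_iff sum.distrib algebra_simps)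
qed

lemma hol_mult: assumes "hol U g" "hol U h" shows "hol U (\<lambda>q. g q * h q)"
  unfolding hol_def
proof
  fix p assume p: "p \<in> U"
  obtain c1 where 1: "(g has_derivative (\<lambda>v. \<Sum>a\<in>UNIV. c1$a * v$a)) (at p)" using assms(1) p hol_def by blast
  obtain c2 where 2: "(h has_derivative (\<lambda>v. \<Sum>a\<in>UNIV. c2$a * v$a)) (at p)" using assms(2) p hol_def by blast
  show "\<exists>c. ((\<lambda>q. g q * h q) has_derivative (\<lambda>v. \<Sum>a\<in>UNIV. c$a * v$a)) (at p)"
  proof (rule exI[of _ "g p *s c2 + h p *s c1"], rule has_derivative_eq_rhs[OF has_derivative_mult[OF 1 2]], rule ext)
    fix v :: "complex^'a"
    have "(\<Sum>a\<in>UNIV. (g p *s c2 + h p *s c1) $ a * v $ a) = (\<Sum>a\<in>UNIV. g p * (c2 $ a * v $ a) + h p * (c1 $ a * v $ a))"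
      by (rule sum.cong) (simp_all add: distrib_right mult.assoc)
    also have "\<dots> = g p * (\<Sum>a\<in>UNIV. c2 $ a * v $ a) + (\<Sum>a\<in>UNIV. c1 $ a * v $ a) * h p"
      by (simp add: sum.distrib sum_distrib_left mult.commute)
    finally show "g p * (\<Sum>a\<in>UNIV. c2 $ a * v $ a) + (\<Sum>a\<in>UNIV. c1 $ a * v $ a) * h p = (\<Sum>a\<in>UNIV. (g p *s c2 + h p *s c1) $ a * v $ a)" by simp
  qed
qed

lemma hol_neg: assumes "hol U g" shows "hol U (\<lambda>q. - g q)"
  using hol_mult[OF hol_const[of U "-1"] assms] by simp

lemma hol_diff: assumes "hol U g" "hol U h" shows "hol U (\<lambda>q. g q - h q)"
  using hol_add[OF assms(1) hol_neg[OF assms(2)]] by simp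

lemma hol_sum: assumes "\<And>i. i \<in> S \<Longrightarrow> hol U (g i)" shows "hol U (\<lambda>q. \<Sum>i\<in>S. g i q)"
  using assms
proof (induction S rule: infinite_finite_induct)
  case (infinite A) then show ?case by (simp add: hol_const)
next
  case empty then show ?case by (simp add: hol_const)
next
  case (insert x F) then show ?case by (simp add: hol_add)
qed

lemma fpot_hol:
  assumes "holo_vec U z" "holo_vec U w" "holo_fun U F"
  shows "hol U (fpot z w F)"
proof -
  have "hol U (\<lambda>q. 2 * F q - (\<Sum>i\<in>UNIV. z q $ i * w q $ i))"
  proof (rule hol_diff)
    show "hol U (\<lambda>q. 2 * F q)" by (rule hol_mult[OF hol_const holo_fun_hol[OF assms(3)]])
    show "hol U (\<lambda>q. \<Sum>i\<in>UNIV. z q $ i * w q $ i)"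
      by (rule hol_sum, rule hol_mult[OF holo_vec_hol[OF assms(1)] holo_vec_hol[OF assms(2)]])
  qed
  then show ?thesis by (simp add: fpot_def[abs_def])
qed

definition sm :: "complex \<Rightarrow> complex \<times> complex \<times> (complex^'n) \<times> (complex^'n) \<Rightarrow> complex \<times> complex \<times> (complex^'n) \<times> (complex^'n)" where
  "sm c X = (c * fst X, c * fst (snd X), c *s fst (snd (snd X)), c *s snd (snd (snd X)))"

lemma gh_expand:
  "gamma_hat (a0, a1, az, aw) (b0, b1, bz, bw) =
     \<i> * (a0 * cnj b1 - cnj b0 * a1 + (\<Sum>i\<in>UNIV. az$i * cnj (bw$i) - cnj (bz$i) * aw$i))"
  by (simp add: gamma_hat_def Omega_hat_def Omega_def)

lemma gh_addL: "gamma_hat (X + X') Y = gamma_hat X Y + gamma_hat X' Y"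
  by (cases X; cases X'; cases Y) (simp add: gh_expand sum.distrib sum_subtractf algebra_simps)

lemma gh_addR: "gamma_hat X (Y + Y') = gamma_hat X Y + gamma_hat X Y'"
  by (cases X; cases Y; cases Y') (simp add: gh_expand sum.distrib sum_subtractf algebra_simps)

lemma gh_smL: "gamma_hat (sm c X) Y = c * gamma_hat X Y"
  by (cases X; cases Y) (simp add: gh_expand sm_def sum_distrib_left algebra_simps)

lemma gh_smR: "gamma_hat X (sm c Y) = cnj c * gamma_hat X Y"
  by (cases X; cases Y) (simp add: gh_expand sm_def sum_distrib_left algebra_simps)

lemma gh_herm: "cnj (gamma_hat X Y) = gamma_hat Y X"
  by (cases X; cases Y) (simp add: gh_expand sum_subtractf algebra_simps)

lemma gh_zeroL: "gamma_hat 0 Y = 0"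
  by (cases Y) (simp add: zero_prod_def gh_expand)

lemma gh_zeroR: "gamma_hat X 0 = 0"
  by (cases X) (simp add: zero_prod_def gh_expand)

lemma gh_sumL: "gamma_hat (\<Sum>a\<in>S. X a) Y = (\<Sum>a\<in>S. gamma_hat (X a) Y)"
  by (induction S rule: infinite_finite_induct) (auto simp: gh_zeroL gh_addL)

lemma gh_sumR: "gamma_hat Y (\<Sum>a\<in>S. X a) = (\<Sum>a\<in>S. gamma_hat Y (X a))"
  by (induction S rule: infinite_finite_induct) (auto simp: gh_zeroR gh_addR)

lemma norm_smult_vec: "norm (c *s (x::complex^'m)) = norm c * norm x"
  unfolding norm_vec_def by (simp add: norm_mult L2_set_right_distrib)

lemma bb_smult: "bounded_bilinear (\<lambda>(c::complex) (x::complex^'m). c *s x)"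
proof
  show "(a + a') *s b = a *s b + a' *s b" for a a' :: complex and b :: "complex^'m"
    by (simp add: vec_eq_iff algebra_simps)
  show "a *s (b + b') = a *s b + a *s b'" for a :: complex and b b' :: "complex^'m"
    by (simp add: vec_eq_iff algebra_simps)
  show "(r *\<^sub>R a) *s b = r *\<^sub>R (a *s b)" for r and a :: complex and b :: "complex^'m"
    by (simp add: vec_eq_iff)
  show "a *s (r *\<^sub>R b) = r *\<^sub>R (a *s b)" for r and a :: complex and b :: "complex^'m"
    by (simp add: vec_eq_iff)
  show "\<exists>K. \<forall>a b. norm (a *s (b::complex^'m)) \<le> norm a * norm b * K"
    by (rule exI[of _ 1]) (simp add: norm_smult_vec)
qed

lemma hol_expand:
  fixes g :: "complex^'m \<Rightarrow> complex"
  assumes "hol U g" "q \<in> U"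
  shows "frechet_derivative g (at q) x = (\<Sum>a\<in>UNIV. x$a * frechet_derivative g (at q) (axis a 1))"
proof -
  have lin: "linear (frechet_derivative g (at q))"
    using hol_D(1)[OF assms] has_derivative_linear by blast
  have "frechet_derivative g (at q) x = frechet_derivative g (at q) (\<Sum>a\<in>UNIV. (x$a) *s axis a 1)"
    by (simp add: basis_expansion)
  also have "\<dots> = (\<Sum>a\<in>UNIV. frechet_derivative g (at q) ((x$a) *s axis a 1))" by (rule linear_sum[OF lin])
  also have "\<dots> = (\<Sum>a\<in>UNIV. x$a * frechet_derivative g (at q) (axis a 1))" by (simp add: hol_D(2)[OF assms])
  finally show ?thesis .
qed

locale skp =
  fixes U :: "(complex^'m) set" and z w :: "complex^'m \<Rightarrow> complex^'n" and F :: "complex^'m \<Rightarrow> complex"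
  assumes oU: "open U" and hz: "holo_vec U z" and hw: "holo_vec U w" and hF: "holo_fun U F"
begin

abbreviation "f \<equiv> fpot z w F"
abbreviation "zi i \<equiv> (\<lambda>q. z q $ i)"
abbreviation "wi i \<equiv> (\<lambda>q. w q $ i)"
abbreviation "Dd g q v \<equiv> frechet_derivative g (at q) v"

lemma hf: "hol U f" by (rule fpot_hol[OF hz hw hF])
lemma hzi: "hol U (zi i)" by (rule holo_vec_hol[OF hz])
lemma hwi: "hol U (wi i)" by (rule holo_vec_hol[OF hw])

definition Av :: "complex^'m \<Rightarrow> complex \<times> complex \<times> (complex^'n) \<times> (complex^'n)" where
  "Av q = (1, f q, z q, w q)"

definition DAv :: "complex^'m \<Rightarrow> complex^'m \<Rightarrow> complex \<times> complex \<times> (complex^'n) \<times> (complex^'n)" where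
  "DAv q v = (0, Dd f q v, \<chi> i. Dd (zi i) q v, \<chi> i. Dd (wi i) q v)"

lemma conif_eq: "conif z w F = (\<lambda>X. (fst X, fst X * f (snd X), fst X *s z (snd X), fst X *s w (snd X)))"
  by (auto simp: conif_def fun_eq_iff split: prod.splits)

lemma conif_sm: "conif z w F (z0, p) = sm z0 (Av p)"
  by (simp add: conif_def sm_def Av_def)

lemma conif_deriv:
  assumes p: "p \<in> U"
  shows "(conif z w F has_derivative (\<lambda>X. sm (fst X) (Av p) + sm z0 (DAv p (snd X)))) (at (z0, p))"
proof -
  have dsnd: "(snd has_derivative snd) (at (z0, p))" by (rule has_derivative_snd[OF has_derivative_ident])
  have dfst: "(fst has_derivative fst) (at (z0, p))" by (rule has_derivative_fst[OF has_derivative_ident])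
  have df: "((\<lambda>X. f (snd X)) has_derivative (\<lambda>X. Dd f p (snd X))) (at (z0, p))"
    using has_derivative_compose[OF dsnd, of f] hol_D(1)[OF hf p] by simp
  have dz: "((\<lambda>X. z (snd X)) has_derivative (\<lambda>X. Dd z p (snd X))) (at (z0, p))"
    using has_derivative_compose[OF dsnd, of z] holo_vec_D[OF hz p] by simp
  have dw: "((\<lambda>X. w (snd X)) has_derivative (\<lambda>X. Dd w p (snd X))) (at (z0, p))"
    using has_derivative_compose[OF dsnd, of w] holo_vec_D[OF hw p] by simp
  have d2: "((\<lambda>X. fst X * f (snd X)) has_derivative (\<lambda>h. z0 * Dd f p (snd h) + fst h * f p)) (at (z0, p))"
    using has_derivative_mult[OF dfst df] by simp
  have d3: "((\<lambda>X. fst X *s z (snd X)) has_derivative (\<lambda>h. z0 *s Dd z p (snd h) + fst h *s z p)) (at (z0, p))"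
    using bounded_bilinear.FDERIV[OF bb_smult dfst dz] by simp
  have d4: "((\<lambda>X. fst X *s w (snd X)) has_derivative (\<lambda>h. z0 *s Dd w p (snd h) + fst h *s w p)) (at (z0, p))"
    using bounded_bilinear.FDERIV[OF bb_smult dfst dw] by simp
  have "(conif z w F has_derivative (\<lambda>h. (fst h, z0 * Dd f p (snd h) + fst h * f p,
          z0 *s Dd z p (snd h) + fst h *s z p, z0 *s Dd w p (snd h) + fst h *s w p))) (at (z0, p))"
    unfolding conif_eq by (intro has_derivative_Pair dfst d2 d3 d4)
  moreover have "(\<lambda>h. (fst h, z0 * Dd f p (snd h) + fst h * f p,
          z0 *s Dd z p (snd h) + fst h *s z p, z0 *s Dd w p (snd h) + fst h *s w p))
        = (\<lambda>X. sm (fst X) (Av p) + sm z0 (DAv p (snd X)))"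
    by (auto simp: fun_eq_iff sm_def Av_def DAv_def vec_eq_iff holo_vec_comp_fd[OF hz p] holo_vec_comp_fd[OF hw p]
        algebra_simps)
  ultimately show ?thesis by simp
qed

lemma conif_fd:
  assumes p: "p \<in> U"
  shows "frechet_derivative (conif z w F) (at (z0, p)) X = sm (fst X) (Av p) + sm z0 (DAv p (snd X))"
  by (simp add: frechet_derivative_at[OF conif_deriv[OF p, of z0], symmetric])

lemma Av_k: "gamma_hat (Av q) (Av q) = complex_of_real (2 * (Im (f q) + Kpot z w q))"
proof -
  define S where "S = (\<Sum>i\<in>UNIV. z q $ i * cnj (w q $ i) - cnj (z q $ i) * w q $ i)"
  have S0: "Re S = 0" unfolding S_def by (simp add: Re_sum)
  have Kp: "Kpot z w q = - Im S / 2"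
    by (simp add: Kpot_def gamma_def Omega_def conj_pt_def S_def)
  show ?thesis
    by (simp add: Av_def gh_expand complex_eq_iff Kp S0 flip: S_def)
qed

end

lemma gh_vd:
  assumes "(a0 has_vector_derivative a0') (at t)" "(a1 has_vector_derivative a1') (at t)"
    "\<And>i. ((\<lambda>s. az s $ i) has_vector_derivative az' $ i) (at t)"
    "\<And>i. ((\<lambda>s. aw s $ i) has_vector_derivative aw' $ i) (at t)"
    "(b0 has_vector_derivative b0') (at t)" "(b1 has_vector_derivative b1') (at t)"
    "\<And>i. ((\<lambda>s. bz s $ i) has_vector_derivative bz' $ i) (at t)"
    "\<And>i. ((\<lambda>s. bw s $ i) has_vector_derivative bw' $ i) (at t)"
  shows "((\<lambda>s. gamma_hat (a0 s, a1 s, az s, aw s) (b0 s, b1 s, bz s, bw s)) has_vector_derivative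
    gamma_hat (a0', a1', az', aw') (b0 t, b1 t, bz t, bw t) + gamma_hat (a0 t, a1 t, az t, aw t) (b0', b1', bz', bw')) (at t)"
  unfolding gh_expand
  by (rule has_vector_derivative_eq_rhs, (rule derivative_intros assms)+)
     (simp add: sum.distrib sum_subtractf algebra_simps)

lemma vd_divide:
  fixes f g :: "real \<Rightarrow> complex"
  assumes "(f has_vector_derivative f') (at t)" "(g has_vector_derivative g') (at t)" "g t \<noteq> 0"
  shows "((\<lambda>s. f s / g s) has_vector_derivative (f' * g t - f t * g') / (g t * g t)) (at t)"
proof -
  have "((\<lambda>s. f s / g s) has_derivative (\<lambda>h. ((h *\<^sub>R f') * g t - f t * (h *\<^sub>R g')) / (g t * g t))) (at t)"
    using has_derivative_divide'[OF assms(1,2)[unfolded has_vector_derivative_def] assms(3)] .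
  then show ?thesis
    unfolding has_vector_derivative_def
    by (rule has_derivative_eq_rhs) (auto simp: fun_eq_iff scaleR_conv_of_real algebra_simps)
qed

lemma hol_line_real:
  fixes g :: "complex^'m \<Rightarrow> complex"
  assumes "hol U g" "q \<in> U"
  shows "((\<lambda>t. g (q + t *\<^sub>R v)) has_vector_derivative frechet_derivative g (at q) v) (at 0)"
proof -
  have d1: "((\<lambda>t::real. q + t *\<^sub>R v) has_derivative (\<lambda>h. h *\<^sub>R v)) (at 0)"
    by (auto intro!: derivative_eq_intros)
  have lin: "linear (frechet_derivative g (at q))"
    using hol_D(1)[OF assms] has_derivative_linear by blast
  have "((\<lambda>t. g (q + t *\<^sub>R v)) has_derivative (\<lambda>h. frechet_derivative g (at q) (h *\<^sub>R v))) (at 0)"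
    using has_derivative_compose[OF d1, of g] hol_D(1)[OF assms] by simp
  then show ?thesis
    unfolding has_vector_derivative_def by (simp add: linear_scale[OF lin])
qed

lemma smul_real: "complex_of_real t *s (x::complex^'m) = t *\<^sub>R x"
  unfolding vec_eq_iff vector_smult_component vector_scaleR_component by (simp add: scaleR_conv_of_real)

lemma sec_dirs:
  fixes g :: "complex^'m \<Rightarrow> complex"
  assumes "hol U g" "open U" "p \<in> U"
  shows "\<exists>c. ((\<lambda>t. frechet_derivative g (at (p + t *\<^sub>R axis a 1)) u) has_vector_derivative c) (at 0) \<and>
             ((\<lambda>t. frechet_derivative g (at (p + t *\<^sub>R axis a \<i>)) u) has_vector_derivative \<i> * c) (at 0)"
proof -
  obtain c where c: "((\<lambda>s. frechet_derivative g (at (p + s *s axis a 1)) u) has_field_derivative c) (at 0)"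
    using hol_second[OF assms, of "axis a 1" u] by blast
  have 1: "((\<lambda>t. frechet_derivative g (at (p + complex_of_real t *s axis a 1)) u) has_vector_derivative c) (at 0)"
    using has_vector_derivative_real_field[of _ c 0] c by simp
  have di: "((\<lambda>s::complex. \<i> * s) has_field_derivative \<i>) (at 0)"
    by (auto intro!: derivative_eq_intros)
  have c': "DERIV (\<lambda>s. frechet_derivative g (at (p + s *s axis a 1)) u) (\<i> * 0) :> c" using c by simp
  have c2: "((\<lambda>s. frechet_derivative g (at (p + (\<i> * s) *s axis a 1)) u) has_field_derivative c * \<i>) (at 0)"
    using DERIV_chain'[OF di c'] .
  have 2: "((\<lambda>t. frechet_derivative g (at (p + (\<i> * complex_of_real t) *s axis a 1)) u) has_vector_derivative c * \<i>) (at 0)"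
    using has_vector_derivative_real_field[of _ "c * \<i>" 0] c2 by simp
  have e1: "complex_of_real t *s axis a 1 = t *\<^sub>R axis a (1::complex)" for t by (rule smul_real)
  have e2: "(\<i> * complex_of_real t) *s axis a 1 = t *\<^sub>R axis a \<i>" for t
    unfolding vec_eq_iff vector_smult_component vector_scaleR_component by (simp add: axis_def scaleR_conv_of_real)
  show ?thesis using 1 2 by (auto simp: e1 e2 mult.commute)
qed

lemma DERIV_ln_abs: "(y::real) \<noteq> 0 \<Longrightarrow> DERIV (\<lambda>x. ln \<bar>x\<bar>) y :> 1 / y"
proof (cases "y > 0")
  case True
  show ?thesis
    by (rule has_field_derivative_transform_within_open[OF DERIV_ln_divide[OF True], of "{0<..}"]) (use True in auto)
next
  case False
  assume "y \<noteq> 0"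
  with False have y: "y < 0" by simp
  have "DERIV (\<lambda>x. ln (- x)) y :> 1 / (- y) * (- 1)"
    by (rule DERIV_chain'[OF _ DERIV_ln_divide], auto intro!: derivative_eq_intros simp: y)
  then have "DERIV (\<lambda>x. ln (- x)) y :> 1 / y" by simp
  then show ?thesis
    by (rule has_field_derivative_transform_within_open[of _ _ _ "{..<0}"]) (use y in auto)
qed

context skp begin

definition hh :: "complex^'m \<Rightarrow> real" where "hh q = Im (f q) + Kpot z w q"
definition gL :: "complex^'m \<Rightarrow> complex" where "gL q = complex_of_real (ln \<bar>hh q\<bar>)"
definition kC :: "complex^'m \<Rightarrow> complex" where "kC q = gamma_hat (Av q) (Av q)"

lemma kC_hh: "kC q = complex_of_real (2 * hh q)"
  by (simp add: kC_def Av_k hh_def)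

lemma DAv_sm:
  assumes "q \<in> U" shows "DAv q (c *s v) = sm c (DAv q v)"
  by (simp add: DAv_def sm_def hol_D(2)[OF hf assms] hol_D(2)[OF hzi assms] hol_D(2)[OF hwi assms] vec_eq_iff)

lemma axis_i: "axis b \<i> = \<i> *s axis b (1::complex)"
  by (simp add: vec_eq_iff axis_def)

lemma gh_line:
  assumes q: "q \<in> U"
    and d0: "(((\<lambda>t. fst (Y t)) has_vector_derivative fst Y') (at 0))"
    and d1: "(((\<lambda>t. fst (snd (Y t))) has_vector_derivative fst (snd Y')) (at 0))"
    and d2: "\<And>i. (((\<lambda>t. fst (snd (snd (Y t))) $ i) has_vector_derivative fst (snd (snd Y')) $ i) (at 0))"
    and d3: "\<And>i. (((\<lambda>t. snd (snd (snd (Y t))) $ i) has_vector_derivative snd (snd (snd Y')) $ i) (at 0))"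
  shows "((\<lambda>t. gamma_hat (Av (q + t *\<^sub>R v)) (Y t)) has_vector_derivative
           gamma_hat (DAv q v) (Y 0) + gamma_hat (Av q) Y') (at 0)"
proof -
  have "((\<lambda>t. gamma_hat (1, f (q + t *\<^sub>R v), z (q + t *\<^sub>R v), w (q + t *\<^sub>R v))
        (fst (Y t), fst (snd (Y t)), fst (snd (snd (Y t))), snd (snd (snd (Y t))))) has_vector_derivative
     gamma_hat (0, Dd f q v, \<chi> i. Dd (zi i) q v, \<chi> i. Dd (wi i) q v)
        (fst (Y 0), fst (snd (Y 0)), fst (snd (snd (Y 0))), snd (snd (snd (Y 0)))) +
     gamma_hat (1, f (q + 0 *\<^sub>R v), z (q + 0 *\<^sub>R v), w (q + 0 *\<^sub>R v))
        (fst Y', fst (snd Y'), fst (snd (snd Y')), snd (snd (snd Y')))) (at 0)"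
    by (rule gh_vd) (use d0 d1 d2 d3 hol_line_real[OF hf q] hol_line_real[OF hzi q] hol_line_real[OF hwi q] in auto)
  then show ?thesis by (simp add: Av_def DAv_def)
qed

lemma kC_vd:
  assumes q: "q \<in> U"
  shows "((\<lambda>t. kC (q + t *\<^sub>R v)) has_vector_derivative
           gamma_hat (DAv q v) (Av q) + gamma_hat (Av q) (DAv q v)) (at 0)"
proof -
  have "((\<lambda>t. gamma_hat (Av (q + t *\<^sub>R v)) (Av (q + t *\<^sub>R v))) has_vector_derivative
           gamma_hat (DAv q v) (Av (q + 0 *\<^sub>R v)) + gamma_hat (Av q) (DAv q v)) (at 0)"
    by (rule gh_line[OF q]) (use hol_line_real[OF hf q] hol_line_real[OF hzi q] hol_line_real[OF hwi q] in
        \<open>auto simp: Av_def DAv_def\<close>)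
  then show ?thesis by (simp add: kC_def)
qed

lemma dir_deriv_gL:
  assumes q: "q \<in> U" and h0: "hh q \<noteq> 0"
  shows "dir_deriv gL q v = (gamma_hat (DAv q v) (Av q) + gamma_hat (Av q) (DAv q v)) / kC q"
proof -
  define \<kappa> where "\<kappa> = gamma_hat (DAv q v) (Av q) + gamma_hat (Av q) (DAv q v)"
  have kr: "\<kappa> = complex_of_real (Re \<kappa>)"
  proof -
    have "cnj \<kappa> = \<kappa>" unfolding \<kappa>_def by (simp add: gh_herm add.commute)
    then show ?thesis by (metis Reals_cnj_iff of_real_Re)
  qed
  have v1: "((\<lambda>t. kC (q + t *\<^sub>R v) / 2) has_vector_derivative \<kappa> / 2) (at 0)"
    using kC_vd[OF q, of v] unfolding \<kappa>_def by (intro derivative_intros)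
  have v2: "((\<lambda>t. Re (kC (q + t *\<^sub>R v) / 2)) has_vector_derivative Re (\<kappa> / 2)) (at 0)"
    by (rule bounded_linear.has_vector_derivative[OF bounded_linear_Re v1])
  have r: "((\<lambda>t. hh (q + t *\<^sub>R v)) has_real_derivative Re \<kappa> / 2) (at 0)"
    using v2 by (simp add: kC_hh has_real_derivative_iff_has_vector_derivative)
  have l: "DERIV (\<lambda>x. ln \<bar>x\<bar>) (hh (q + 0 *\<^sub>R v)) :> 1 / hh q" using DERIV_ln_abs[OF h0] by simp
  have "((\<lambda>t. ln \<bar>hh (q + t *\<^sub>R v)\<bar>) has_real_derivative 1 / hh q * (Re \<kappa> / 2)) (at 0)"
    by (rule DERIV_chain'[OF r l])
  then have "((\<lambda>t. gL (q + t *\<^sub>R v)) has_vector_derivative complex_of_real (1 / hh q * (Re \<kappa> / 2))) (at 0)"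
    unfolding gL_def by (rule has_vector_derivative_of_real)
  then have "dir_deriv gL q v = complex_of_real (1 / hh q * (Re \<kappa> / 2))"
    unfolding dir_deriv_def by (rule vector_derivative_at)
  also have "\<dots> = \<kappa> / kC q"
    by (subst kr) (simp add: kC_hh h0 field_simps)
  finally show ?thesis by (simp add: \<kappa>_def)
qed

lemma wirt_dbar_gL:
  assumes q: "q \<in> U" and h0: "hh q \<noteq> 0"
  shows "wirt_dbar b gL q = gamma_hat (Av q) (DAv q (axis b 1)) / kC q"
proof -
  have kne: "kC q \<noteq> 0" by (simp add: kC_hh h0)
  have "wirt_dbar b gL q = ((gamma_hat (DAv q (axis b 1)) (Av q) + gamma_hat (Av q) (DAv q (axis b 1)))
       + \<i> * (\<i> * gamma_hat (DAv q (axis b 1)) (Av q) + cnj \<i> * gamma_hat (Av q) (DAv q (axis b 1)))) / kC q / 2"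
    unfolding wirt_dbar_def dir_deriv_gL[OF q h0] axis_i DAv_sm[OF q] gh_smL gh_smR
    by (simp add: field_simps kne)
  also have "\<dots> = gamma_hat (Av q) (DAv q (axis b 1)) / kC q"
    by (simp add: field_simps kne)
  finally show ?thesis .
qed

end

context skp begin

lemma hh_cont: "continuous_on U hh"
proof -
  have e: "hh = (\<lambda>q. Im (f q) + Re (\<i> * (\<Sum>i\<in>UNIV. zi i q * cnj (wi i q) - cnj (zi i q) * wi i q) / 2))"
    by (simp add: fun_eq_iff hh_def Kpot_def gamma_def Omega_def conj_pt_def)
  have cf: "continuous_on U f" by (rule hol_cont[OF hf])
  have cz: "continuous_on U (zi i)" for i by (rule hol_cont[OF hzi])
  have cw: "continuous_on U (wi i)" for i by (rule hol_cont[OF hwi])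
  have cZ: "continuous_on U z" by (meson continuous_at_imp_continuous_on has_derivative_continuous holo_vec_D hz)
  have cW: "continuous_on U w" by (meson continuous_at_imp_continuous_on has_derivative_continuous holo_vec_D hw)
  show ?thesis unfolding e
    by (intro continuous_intros cf cz cw cZ cW) auto
qed

lemma second_wirt:
  assumes p: "p \<in> U" and h0: "hh p \<noteq> 0"
  shows "wirt_d a (wirt_dbar b gL) p =
     gamma_hat (DAv p (axis a 1)) (DAv p (axis b 1)) / kC p
     - gamma_hat (Av p) (DAv p (axis b 1)) * gamma_hat (DAv p (axis a 1)) (Av p) / (kC p * kC p)"
proof -
  define ea :: "complex^'m" where "ea = axis a 1"
  define eb :: "complex^'m" where "eb = axis b 1"
  define V where "V = U \<inter> hh -` (- {0})"
  have oV: "open V" unfolding V_def by (rule continuous_open_preimage[OF hh_cont oU]) auto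
  have pV: "p \<in> V" using p h0 by (simp add: V_def)
  have kne: "kC p \<noteq> 0" by (simp add: kC_hh h0)
  define E where "E = (\<lambda>v t. gamma_hat (Av (p + t *\<^sub>R v)) (DAv (p + t *\<^sub>R v) eb))"
  define K where "K = (\<lambda>v t. kC (p + t *\<^sub>R v))"
  have Wb_eq: "wirt_dbar b gL (p + t *\<^sub>R v) = E v t / K v t" if "t \<in> {t. p + t *\<^sub>R v \<in> V}" for v t
    using that wirt_dbar_gL[of "p + t *\<^sub>R v" b] by (simp add: V_def E_def K_def eb_def)
  have oT: "open {t::real. p + t *\<^sub>R v \<in> V}" for v
  proof -
    have "continuous_on UNIV (\<lambda>t::real. p + t *\<^sub>R v)" by (intro continuous_intros)
    from continuous_open_preimage[OF this open_UNIV oV] show ?thesis by (simp add: vimage_def)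
  qed
  have dd: "dir_deriv (wirt_dbar b gL) p v = (E' * kC p - E v 0 * K') / (kC p * kC p)"
    if E': "(E v has_vector_derivative E') (at 0)" and K': "(K v has_vector_derivative K') (at 0)" for v E' K'
  proof -
    have K0: "K v 0 = kC p" by (simp add: K_def)
    have "((\<lambda>t. E v t / K v t) has_vector_derivative (E' * K v 0 - E v 0 * K') / (K v 0 * K v 0)) (at 0)"
      by (rule vd_divide[OF E' K']) (simp add: K0 kne)
    then have "((\<lambda>t. wirt_dbar b gL (p + t *\<^sub>R v)) has_vector_derivative (E' * kC p - E v 0 * K') / (kC p * kC p)) (at 0)"
      unfolding K0
      by (rule has_vector_derivative_transform_within_open[OF _ oT[of v]]) (use pV Wb_eq in auto)
    then show ?thesis unfolding dir_deriv_def by (rule vector_derivative_at)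
  qed
  obtain cf where cf1: "((\<lambda>t. Dd f (p + t *\<^sub>R axis a 1) eb) has_vector_derivative cf) (at 0)"
      and cf2: "((\<lambda>t. Dd f (p + t *\<^sub>R axis a \<i>) eb) has_vector_derivative \<i> * cf) (at 0)"
    using sec_dirs[OF hf oU p, of a eb] by blast
  have "\<exists>c. ((\<lambda>t. Dd (zi i) (p + t *\<^sub>R axis a 1) eb) has_vector_derivative c) (at 0) \<and>
      ((\<lambda>t. Dd (zi i) (p + t *\<^sub>R axis a \<i>) eb) has_vector_derivative \<i> * c) (at 0)" for i
    using sec_dirs[OF hzi[of i] oU p, of a eb] by blast
  then have "\<forall>i. \<exists>c. ((\<lambda>t. Dd (zi i) (p + t *\<^sub>R axis a 1) eb) has_vector_derivative c) (at 0) \<and>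
      ((\<lambda>t. Dd (zi i) (p + t *\<^sub>R axis a \<i>) eb) has_vector_derivative \<i> * c) (at 0)" by blast
  then obtain cz where cz: "\<And>i. ((\<lambda>t. Dd (zi i) (p + t *\<^sub>R axis a 1) eb) has_vector_derivative cz i) (at 0) \<and>
      ((\<lambda>t. Dd (zi i) (p + t *\<^sub>R axis a \<i>) eb) has_vector_derivative \<i> * cz i) (at 0)"
    by metis
  have "\<exists>c. ((\<lambda>t. Dd (wi i) (p + t *\<^sub>R axis a 1) eb) has_vector_derivative c) (at 0) \<and>
      ((\<lambda>t. Dd (wi i) (p + t *\<^sub>R axis a \<i>) eb) has_vector_derivative \<i> * c) (at 0)" for i
    using sec_dirs[OF hwi[of i] oU p, of a eb] by blast
  then have "\<forall>i. \<exists>c. ((\<lambda>t. Dd (wi i) (p + t *\<^sub>R axis a 1) eb) has_vector_derivative c) (at 0) \<and>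
      ((\<lambda>t. Dd (wi i) (p + t *\<^sub>R axis a \<i>) eb) has_vector_derivative \<i> * c) (at 0)" by blast
  then obtain cw where cw: "\<And>i. ((\<lambda>t. Dd (wi i) (p + t *\<^sub>R axis a 1) eb) has_vector_derivative cw i) (at 0) \<and>
      ((\<lambda>t. Dd (wi i) (p + t *\<^sub>R axis a \<i>) eb) has_vector_derivative \<i> * cw i) (at 0)"
    by metis
  define C where "C = (0::complex, cf, \<chi> i. cz i, \<chi> i. cw i)"
  have E1: "(E ea has_vector_derivative gamma_hat (DAv p ea) (DAv p eb) + gamma_hat (Av p) C) (at 0)"
  proof -
    have "((\<lambda>t. gamma_hat (Av (p + t *\<^sub>R ea)) (DAv (p + t *\<^sub>R ea) eb)) has_vector_derivative
       gamma_hat (DAv p ea) (DAv (p + 0 *\<^sub>R ea) eb) + gamma_hat (Av p) C) (at 0)"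
      by (rule gh_line[OF p]) (use cf1 cz cw in \<open>auto simp: DAv_def C_def ea_def\<close>)
    then show ?thesis by (simp add: E_def)
  qed
  have E2: "(E (axis a \<i>) has_vector_derivative
      gamma_hat (DAv p (axis a \<i>)) (DAv p eb) + gamma_hat (Av p) (sm \<i> C)) (at 0)"
  proof -
    have "((\<lambda>t. gamma_hat (Av (p + t *\<^sub>R axis a \<i>)) (DAv (p + t *\<^sub>R axis a \<i>) eb)) has_vector_derivative
       gamma_hat (DAv p (axis a \<i>)) (DAv (p + 0 *\<^sub>R axis a \<i>) eb) + gamma_hat (Av p) (sm \<i> C)) (at 0)"
      by (rule gh_line[OF p]) (use cf2 cz cw in \<open>auto simp: DAv_def C_def sm_def\<close>)
    then show ?thesis by (simp add: E_def)
  qed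
  have K1: "(K ea has_vector_derivative gamma_hat (DAv p ea) (Av p) + gamma_hat (Av p) (DAv p ea)) (at 0)"
    unfolding K_def by (rule kC_vd[OF p])
  have K2: "(K (axis a \<i>) has_vector_derivative
      gamma_hat (DAv p (axis a \<i>)) (Av p) + gamma_hat (Av p) (DAv p (axis a \<i>))) (at 0)"
    unfolding K_def by (rule kC_vd[OF p])
  have E0: "E v 0 = gamma_hat (Av p) (DAv p eb)" for v by (simp add: E_def)
  have ai: "DAv p (axis a \<i>) = sm \<i> (DAv p ea)" by (simp add: axis_i DAv_sm[OF p] ea_def)
  show ?thesis
    unfolding wirt_d_def dd[OF E1 K1, unfolded ea_def] dd[OF E2 K2] E0 ai[unfolded ea_def] gh_smL gh_smR
    by (simp add: field_simps kne ea_def eb_def)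
qed

end

lemma linalg:
  fixes k :: complex and dd :: "'m::finite \<Rightarrow> complex" and G :: "'m \<Rightarrow> 'm \<Rightarrow> complex"
  assumes kr: "cnj k = k" and Gh: "\<And>a b. cnj (G a b) = G b a"
  shows "(\<forall>z0. z0 \<noteq> 0 \<longrightarrow> nondeg (\<lambda>(X::complex \<times> (complex^'m)) Y. fst X * cnj (fst Y) * k
            + fst X * cnj z0 * (\<Sum>b\<in>UNIV. cnj (snd Y $ b) * cnj (dd b))
            + z0 * cnj (fst Y) * (\<Sum>a\<in>UNIV. snd X $ a * dd a)
            + z0 * cnj z0 * (\<Sum>a\<in>UNIV. snd X $ a * (\<Sum>b\<in>UNIV. cnj (snd Y $ b) * G a b)))
          \<and> z0 * cnj z0 * k \<noteq> 0)
   \<longleftrightarrow> (k \<noteq> 0 \<and> nondeg (\<lambda>(X::complex^'m) Y. (\<i>/2) * (\<Sum>a\<in>UNIV. \<Sum>b\<in>UNIV.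
            (G a b / k - cnj (dd b) * dd a / (k*k)) * (X$a * cnj (Y$b) - Y$a * cnj (X$b)))))"
    (is "?L \<longleftrightarrow> ?R")
proof -
  define df where "df = (\<lambda>x::complex^'m. \<Sum>a\<in>UNIV. x $ a * dd a)"
  define ef where "ef = (\<lambda>y::complex^'m. \<Sum>b\<in>UNIV. cnj (y $ b) * cnj (dd b))"
  define Gf where "Gf = (\<lambda>x y::complex^'m. \<Sum>a\<in>UNIV. x $ a * (\<Sum>b\<in>UNIV. cnj (y $ b) * G a b))"
  define Lc where "Lc = (\<lambda>a b. G a b / k - cnj (dd b) * dd a / (k*k))"
  define Lf where "Lf = (\<lambda>x y::complex^'m. \<Sum>a\<in>UNIV. \<Sum>b\<in>UNIV. Lc a b * (x$a * cnj (y$b)))"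
  define Om where "Om = (\<lambda>(X::complex^'m) Y. (\<i>/2) * (\<Sum>a\<in>UNIV. \<Sum>b\<in>UNIV.
            (G a b / k - cnj (dd b) * dd a / (k*k)) * (X$a * cnj (Y$b) - Y$a * cnj (X$b))))"
  define Bf where "Bf = (\<lambda>z0 (X::complex \<times> (complex^'m)) Y. fst X * cnj (fst Y) * k
            + fst X * cnj z0 * ef (snd Y) + z0 * cnj (fst Y) * df (snd X) + z0 * cnj z0 * Gf (snd X) (snd Y))"
  have Lcc: "cnj (Lc a b) = Lc b a" for a b
    unfolding Lc_def by (simp add: Gh kr)
  have Lf_eq: "Lf x y = Gf x y / k - df x * ef y / (k*k)" for x y
  proof -
    have "Lf x y = (\<Sum>a\<in>UNIV. \<Sum>b\<in>UNIV. x$a * (cnj (y$b) * G a b) / k - (x $ a * dd a) * (cnj (y $ b) * cnj (dd b)) / (k*k))"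
      unfolding Lf_def Lc_def by (intro sum.cong refl) (simp add: algebra_simps)
    also have "\<dots> = (\<Sum>a\<in>UNIV. \<Sum>b\<in>UNIV. x$a * (cnj (y$b) * G a b)) / k
        - (\<Sum>a\<in>UNIV. \<Sum>b\<in>UNIV. (x $ a * dd a) * (cnj (y $ b) * cnj (dd b))) / (k*k)"
      by (simp add: sum_subtractf sum_divide_distrib)
    also have "(\<Sum>a\<in>UNIV. \<Sum>b\<in>UNIV. x$a * (cnj (y$b) * G a b)) = Gf x y"
      by (simp add: Gf_def sum_distrib_left)
    also have "(\<Sum>a\<in>UNIV. \<Sum>b\<in>UNIV. (x $ a * dd a) * (cnj (y $ b) * cnj (dd b))) = df x * ef y"
      by (simp add: df_def ef_def sum_product)
    finally show ?thesis .
  qed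
  have cLf: "cnj (Lf x y) = (\<Sum>a\<in>UNIV. \<Sum>b\<in>UNIV. Lc a b * (y$a * cnj (x$b)))" for x y
  proof -
    have "cnj (Lf x y) = (\<Sum>a\<in>UNIV. \<Sum>b\<in>UNIV. Lc b a * (cnj (x$a) * y$b))"
      unfolding Lf_def by (simp add: Lcc)
    also have "\<dots> = (\<Sum>b\<in>UNIV. \<Sum>a\<in>UNIV. Lc b a * (cnj (x$a) * y$b))" by (rule sum.swap)
    finally show ?thesis by (simp add: mult.commute)
  qed
  have Om_eq: "Om x y = (\<i>/2) * (Lf x y - cnj (Lf x y))" for x y
    unfolding Om_def cLf unfolding Lf_def
    by (simp add: Lc_def sum_subtractf right_diff_distrib)
  have Lf_i: "Lf x (\<i> *s y) = - \<i> * Lf x y" for x y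
    unfolding Lf_def by (simp add: sum_distrib_left algebra_simps)
  have Lf0: "Lf x 0 = 0" for x unfolding Lf_def by simp
  have om0: "(\<forall>y. Om x y = 0) \<longleftrightarrow> (\<forall>y. Lf x y = 0)" for x
  proof
    assume H: "\<forall>y. Om x y = 0"
    show "\<forall>y. Lf x y = 0"
    proof
      fix y
      have 1: "Lf x y = cnj (Lf x y)" using H[rule_format, of y] by (simp add: Om_eq)
      have "Lf x (\<i> *s y) = cnj (Lf x (\<i> *s y))" using H[rule_format, of "\<i> *s y"] by (simp add: Om_eq)
      then have "- \<i> * Lf x y = \<i> * cnj (Lf x y)" by (simp add: Lf_i)
      then have "- \<i> * Lf x y = \<i> * Lf x y" using 1 by simp
      then show "Lf x y = 0" by (simp add: algebra_simps)
    qed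
  next
    assume "\<forall>y. Lf x y = 0" then show "\<forall>y. Om x y = 0" by (simp add: Om_eq)
  qed
  have ef0: "ef 0 = 0" and Gf0: "Gf x 0 = 0" for x by (simp_all add: ef_def Gf_def)
  have ndO: "nondeg Om \<longleftrightarrow> (\<forall>x. (\<forall>y. Lf x y = 0) \<longrightarrow> x = 0)"
    unfolding nondeg_def using om0 by blast
  have "?L \<longleftrightarrow> (\<forall>z0. z0 \<noteq> 0 \<longrightarrow> nondeg (Bf z0) \<and> z0 * cnj z0 * k \<noteq> 0)"
    unfolding Bf_def df_def ef_def Gf_def by simp
  also have "\<dots> \<longleftrightarrow> k \<noteq> 0 \<and> nondeg Om"
  proof
    assume H: "\<forall>z0. z0 \<noteq> 0 \<longrightarrow> nondeg (Bf z0) \<and> z0 * cnj z0 * k \<noteq> 0"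
    have k0: "k \<noteq> 0" using H[rule_format, of 1] by simp
    have nd1: "nondeg (Bf 1)" using H[rule_format, of 1] by simp
    have "\<forall>x. (\<forall>y. Lf x y = 0) \<longrightarrow> x = 0"
    proof (intro allI impI)
      fix x assume L0: "\<forall>y. Lf x y = 0"
      define X where "X = (- df x / k, x)"
      have "\<forall>Y. Bf 1 X Y = 0"
      proof
        fix Y :: "complex \<times> (complex^'m)"
        have "Bf 1 X Y = Gf x (snd Y) - df x * ef (snd Y) / k"
          using k0 by (simp add: Bf_def X_def field_simps)
        also have "\<dots> = k * Lf x (snd Y)" using k0 by (simp add: Lf_eq field_simps)
        finally show "Bf 1 X Y = 0" using L0 by simp
      qed
      then have "X = 0" using nd1 unfolding nondeg_def by blast
      then show "x = 0" by (simp add: X_def zero_prod_def)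
    qed
    then show "k \<noteq> 0 \<and> nondeg Om" using k0 ndO by simp
  next
    assume H: "k \<noteq> 0 \<and> nondeg Om"
    then have k0: "k \<noteq> 0" and ndx: "\<And>x. (\<forall>y. Lf x y = 0) \<Longrightarrow> x = 0" using ndO by auto
    show "\<forall>z0. z0 \<noteq> 0 \<longrightarrow> nondeg (Bf z0) \<and> z0 * cnj z0 * k \<noteq> 0"
    proof (intro allI impI conjI)
      fix z0 :: complex assume z0: "z0 \<noteq> 0"
      have zz: "z0 * cnj z0 \<noteq> 0" using z0 by simp
      then show "z0 * cnj z0 * k \<noteq> 0" using k0 by simp
      show "nondeg (Bf z0)" unfolding nondeg_def
      proof (intro allI impI)
        fix X :: "complex \<times> (complex^'m)" assume B0: "\<forall>Y. Bf z0 X Y = 0"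
        obtain x0 x where X: "X = (x0, x)" by (cases X)
        have e1: "x0 * k + z0 * df x = 0" using B0[rule_format, of "(1, 0)"] by (simp add: Bf_def X ef0 Gf0)
        then have "k * x0 = - (z0 * df x)" by (simp add: algebra_simps eq_neg_iff_add_eq_0)
        then have x0: "x0 = - z0 * df x / k" using k0 by (simp add: field_simps)
        have "\<forall>y. Lf x y = 0"
        proof
          fix y
          have "Bf z0 X (0, y) = 0" using B0 by blast
          then have "x0 * cnj z0 * ef y + z0 * cnj z0 * Gf x y = 0" by (simp add: Bf_def X)
          then have "z0 * cnj z0 * (Gf x y - df x * ef y / k) = 0" by (simp add: x0 field_simps)
          then have "Gf x y - df x * ef y / k = 0" using zz by simp
          then have "k * Lf x y = 0" using k0 by (simp add: Lf_eq field_simps)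
          then show "Lf x y = 0" using k0 by simp
        qed
        then have "x = 0" by (rule ndx)
        then show "X = 0" using x0 by (simp add: X df_def zero_prod_def)
      qed
    qed
  qed
  finally show ?thesis unfolding Om_def .
qed

context skp begin

lemma DAv_expand:
  assumes q: "q \<in> U"
  shows "DAv q x = (\<Sum>a\<in>UNIV. sm (x$a) (DAv q (axis a 1)))"
proof -
  have "DAv q x = (0, \<Sum>a\<in>UNIV. x$a * Dd f q (axis a 1), \<Sum>a\<in>UNIV. x$a *s (\<chi> i. Dd (zi i) q (axis a 1)),
      \<Sum>a\<in>UNIV. x$a *s (\<chi> i. Dd (wi i) q (axis a 1)))"
    unfolding DAv_def
    by (simp add: hol_expand[OF hf q, of x] hol_expand[OF hzi q, of _ x] hol_expand[OF hwi q, of _ x] vec_eq_iff)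
  also have "\<dots> = (\<Sum>a\<in>UNIV. sm (x$a) (DAv q (axis a 1)))"
    by (simp add: sm_def DAv_def prod_eq_iff fst_sum snd_sum)
  finally show ?thesis .
qed

lemma gh_DAv_left: "q \<in> U \<Longrightarrow> gamma_hat (DAv q x) Y = (\<Sum>a\<in>UNIV. x$a * gamma_hat (DAv q (axis a 1)) Y)"
  by (simp add: DAv_expand gh_sumL gh_smL)

lemma gh_DAv_right: "q \<in> U \<Longrightarrow> gamma_hat Y (DAv q x) = (\<Sum>a\<in>UNIV. cnj (x$a) * gamma_hat Y (DAv q (axis a 1)))"
  by (simp add: DAv_expand gh_sumR gh_smR)

lemma per_point:
  assumes p: "p \<in> U"
  shows "(\<forall>z0. z0 \<noteq> 0 \<longrightarrow>
      nondeg (\<lambda>X Y. gamma_hat (frechet_derivative (conif z w F) (at (z0, p)) X)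
                               (frechet_derivative (conif z w F) (at (z0, p)) Y)) \<and>
      gamma_hat (conif z w F (z0, p)) (conif z w F (z0, p)) \<noteq> 0)
    \<longleftrightarrow> (Im (fpot z w F p) + Kpot z w p \<noteq> 0 \<and> nondeg (omega_bar z w F p))"
proof -
  define k where "k = kC p"
  define dd where "dd = (\<lambda>a. gamma_hat (DAv p (axis a 1)) (Av p))"
  define G where "G = (\<lambda>a b. gamma_hat (DAv p (axis a 1)) (DAv p (axis b 1)))"
  have kr: "cnj k = k" by (simp add: k_def kC_hh)
  have Gh: "cnj (G a b) = G b a" for a b by (simp add: G_def gh_herm)
  have hA: "gamma_hat (Av p) (DAv p (axis b 1)) = cnj (dd b)" for b by (simp add: dd_def gh_herm)
  have e1: "gamma_hat (DAv p x) (Av p) = (\<Sum>a\<in>UNIV. x$a * dd a)" for x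
    by (subst gh_DAv_left[OF p]) (simp add: dd_def)
  have e2: "gamma_hat (Av p) (DAv p y) = (\<Sum>b\<in>UNIV. cnj (y$b) * cnj (dd b))" for y
    by (subst gh_DAv_right[OF p]) (simp add: hA)
  have e3a: "gamma_hat (DAv p (axis a 1)) (DAv p y) = (\<Sum>b\<in>UNIV. cnj (y$b) * G a b)" for a y
    by (subst gh_DAv_right[OF p]) (simp add: G_def)
  have e3: "gamma_hat (DAv p x) (DAv p y) = (\<Sum>a\<in>UNIV. x$a * (\<Sum>b\<in>UNIV. cnj (y$b) * G a b))" for x y
    by (subst gh_DAv_left[OF p]) (simp add: e3a)
  have k_hh: "k \<noteq> 0 \<longleftrightarrow> Im (fpot z w F p) + Kpot z w p \<noteq> 0" by (simp only: k_def kC_hh of_real_eq_0_iff hh_def mult_eq_0_iff) simp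
  have B: "gamma_hat (frechet_derivative (conif z w F) (at (z0, p)) X)
                     (frechet_derivative (conif z w F) (at (z0, p)) Y)
     = fst X * cnj (fst Y) * k
            + fst X * cnj z0 * (\<Sum>b\<in>UNIV. cnj (snd Y $ b) * cnj (dd b))
            + z0 * cnj (fst Y) * (\<Sum>a\<in>UNIV. snd X $ a * dd a)
            + z0 * cnj z0 * (\<Sum>a\<in>UNIV. snd X $ a * (\<Sum>b\<in>UNIV. cnj (snd Y $ b) * G a b))" for z0 X Y
    unfolding conif_fd[OF p] gh_addL gh_addR gh_smL gh_smR e1 e2 e3 kC_def[symmetric] k_def[symmetric]
    by (simp add: algebra_simps)
  have C: "gamma_hat (conif z w F (z0, p)) (conif z w F (z0, p)) = z0 * cnj z0 * k" for z0
    by (simp add: conif_sm gh_smL gh_smR k_def kC_def)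
  have gLe: "(\<lambda>q. complex_of_real (ln \<bar>Im (fpot z w F q) + Kpot z w q\<bar>)) = gL"
    by (simp add: fun_eq_iff gL_def hh_def)
  show ?thesis
  proof (cases "k = 0")
    case True
    then show ?thesis using k_hh by (auto simp: C intro: exI[of _ 1])
  next
    case False
    then have h0: "hh p \<noteq> 0" using k_hh by (simp add: hh_def)
    have Om: "omega_bar z w F p = (\<lambda>X Y. (\<i>/2) * (\<Sum>a\<in>UNIV. \<Sum>b\<in>UNIV.
            (G a b / k - cnj (dd b) * dd a / (k*k)) * (X$a * cnj (Y$b) - Y$a * cnj (X$b))))"
    proof -
      have Ge: "gamma_hat (DAv p (axis a 1)) (DAv p (axis b 1)) = G a b" for a b by (simp add: G_def)
      have de: "gamma_hat (DAv p (axis a 1)) (Av p) = dd a" for a by (simp add: dd_def)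
      show ?thesis
        unfolding omega_bar_def ddbar_def gLe
        by (simp add: fun_eq_iff second_wirt[OF p h0] hA Ge de mult.commute flip: k_def)
    qed
    show ?thesis unfolding B C Om k_hh[symmetric] by (rule linalg[OF kr Gh])
  qed
qed

end

theorem mainTheorem12:
  fixes U :: "(complex^'m) set"
    and z w :: "complex^'m \<Rightarrow> complex^'n"
    and F :: "complex^'m \<Rightarrow> complex"
  assumes "CARD('m) = CARD('n)" and "sk_pair U z w F"
  shows "sk_nondegenerate U z w F \<longleftrightarrow>
           ((\<forall>p\<in>U. Im (fpot z w F p) + Kpot z w p \<noteq> 0) \<and>
            (\<forall>p\<in>U. nondeg (omega_bar z w F p)))"
proof -
  interpret skp U z w F
    using assms(2) by unfold_locales (auto simp: sk_pair_def)
  show ?thesis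
    unfolding sk_nondegenerate_def using per_point by blast
qed

end
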